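(* Let $0<r_j\le\infty$ and $0<s_j\le\infty$ for $j=1,\dots,n$, and let $\gamma(\mathbf{r})=\otimes_{j=1}^n\gamma(r_j)$ and $\gamma(\mathbf{s})=\otimes_{j=1}^n\gamma(s_j)$ be thermal states with $\operatorname{supp}\gamma(\mathbf{r})\subseteq\operatorname{supp}\gamma(\mathbf{s})$. Let $\mathcal{F}_{\mathbf{r}}=\{j\in\{1,\dots,n\}: r_j<\infty\}$, $\mathcal{F}_{\mathbf{s}}=\{j: s_j<\infty\}$, and $\mathcal{F}_{\mathbf{r}<\mathbf{s}}=\{j\in\mathcal{F}_{\mathbf{r}}\cap\mathcal{F}_{\mathbf{s}}: r_j<s_j\}$. Then: (1) If $\mathcal{F}_{\mathbf{r}<\mathbf{s}}=\emptyset$ (i.e. $r_j\ge s_j$ for all $j\in\mathcal{F}_{\mathbf{r}}\cap\mathcal{F}_{\mathbf{s}}$), then $D_\alpha(\gamma(\mathbf{r})\|\gamma(\mathbf{s}))<\infty$ for every $\alpha\in(0,1)\cup(1,\infty)$. (2) If $\mathcal{F}_{\mathbf{r}<\mathbf{s}}\neq\emptyset$, then for $\alpha\in(0,1)\cup(1,\infty)$, $$D_\alpha(\gamma(\mathbf{r})\|\gamma(\mathbf{s}))<\infty\iff \alpha<\min_{j\in\mathcal{F}_{\mathbf{r}<\mathbf{s}}}\frac{s_j}{s_j-r_j}.$$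
   Context: One-mode Fock space: $\ell^2(\mathbb{Z}_{\ge 0})$ with orthonormal particle basis $\{|k\rangle\}_{k\ge0}$; the $n$-mode space is the $n$-fold tensor product with basis $|\mathbf{k}\rangle=|k_1\rangle\otimes\cdots\otimes|k_n\rangle$. For $0<s<\infty$ the one-mode thermal state is $\gamma(s)=(1-e^{-s})\sum_{k\ge0}e^{-ks}|k\rangle\langle k|$, and $\gamma(\infty)=|0\rangle\langle0|$. $\operatorname{supp}$ denotes the support (orthogonal complement of the kernel). For states $\rho=\sum_i p_i|x_i\rangle\langle x_i|$, $\sigma=\sum_j q_j|y_j\rangle\langle y_j|$ (spectral decompositions with orthonormal bases), the Petz–Rényi $\alpha$-relative entropy for $\alpha\in(0,1)\cup(1,\infty)$ is $D_\alpha(\rho\|\sigma)=\frac{1}{\alpha-1}\log\sum_{i,j}p_i^\alpha q_j^{1-\alpha}|\langle x_i|y_j\rangle|^2$, with the conventions (for $\alpha>1$) $0^{1-\alpha}=\infty$ and $0\cdot\infty=0$. *)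

theory Defs
  imports "HOL-Analysis.Analysis" "HOL-Library.Extended_Real"
begin

text \<open>Petz--Renyi alpha-relative entropy of two states given by spectral decompositions
  rho = sum_i p i |x_i><x_i| (i in I) and sigma = sum_j q j |y_j><y_j| (j in J), where
  ov i j = |<x_i|y_j>|^2.  Values in the extended reals; natural logarithm.
  Conventions: 0^(1-alpha) = infinity for alpha > 1, and 0 * infinity = 0 (ennreal).\<close>

definition pow_conv :: "real \<Rightarrow> real \<Rightarrow> ennreal" where
  "pow_conv x a = (if x = 0 then (if a < 0 then \<infinity> else if a = 0 then 1 else 0)
                   else ennreal (x powr a))"

definition renyi_sum :: "real \<Rightarrow> 'i set \<Rightarrow> ('i \<Rightarrow> real) \<Rightarrow> 'j set \<Rightarrow> ('j \<Rightarrow> real)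
    \<Rightarrow> ('i \<Rightarrow> 'j \<Rightarrow> real) \<Rightarrow> ennreal" where
  "renyi_sum \<alpha> I p J q ov =
     (\<Sum>\<^sub>\<infinity>(i, j)\<in>I \<times> J. pow_conv (p i) \<alpha> * pow_conv (q j) (1 - \<alpha>) * ennreal (ov i j))"

definition log_ext :: "ennreal \<Rightarrow> ereal" where
  "log_ext S = (if S = 0 then -\<infinity> else if S = \<infinity> then \<infinity> else ereal (ln (enn2real S)))"

definition petz_renyi :: "real \<Rightarrow> 'i set \<Rightarrow> ('i \<Rightarrow> real) \<Rightarrow> 'j set \<Rightarrow> ('j \<Rightarrow> real)
    \<Rightarrow> ('i \<Rightarrow> 'j \<Rightarrow> real) \<Rightarrow> ereal" where
  "petz_renyi \<alpha> I p J q ov = ereal (1 / (\<alpha> - 1)) * log_ext (renyi_sum \<alpha> I p J q ov)"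

text \<open>n-mode Fock basis: multi-indices k with k j = 0 for j >= n (modes indexed 0..n-1).\<close>
definition fock_idx :: "nat \<Rightarrow> (nat \<Rightarrow> nat) set" where
  "fock_idx n = {k. \<forall>j\<ge>n. k j = 0}"

text \<open>|<k|k'>|^2 for orthonormal Fock basis vectors.\<close>
definition fock_overlap :: "(nat \<Rightarrow> nat) \<Rightarrow> (nat \<Rightarrow> nat) \<Rightarrow> real" where
  "fock_overlap k k' = (if k = k' then 1 else 0)"

text \<open>Eigenvalue of the one-mode thermal state gamma(s) on |k>; s = infinity gives |0><0|.\<close>
definition thermal1 :: "ereal \<Rightarrow> nat \<Rightarrow> real" where
  "thermal1 s k = (if s = \<infinity> then (if k = 0 then 1 else 0)
                   else (1 - exp (- real_of_ereal s)) * exp (- real k * real_of_ereal s))"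

text \<open>Eigenvalue of gamma(r_1) (x) ... (x) gamma(r_n) on |k_1 ... k_n>.\<close>
definition thermal :: "nat \<Rightarrow> (nat \<Rightarrow> ereal) \<Rightarrow> (nat \<Rightarrow> nat) \<Rightarrow> real" where
  "thermal n r k = (\<Prod>j<n. thermal1 (r j) (k j))"

definition D_thermal :: "real \<Rightarrow> nat \<Rightarrow> (nat \<Rightarrow> ereal) \<Rightarrow> (nat \<Rightarrow> ereal) \<Rightarrow> ereal" where
  "D_thermal \<alpha> n r s = petz_renyi \<alpha> (fock_idx n) (thermal n r) (fock_idx n) (thermal n s) fock_overlap"

text \<open>supp of a diagonal operator = closed span of basis vectors with nonzero eigenvalue.\<close>
definition thermal_supp_le :: "nat \<Rightarrow> (nat \<Rightarrow> ereal) \<Rightarrow> (nat \<Rightarrow> ereal) \<Rightarrow> bool" where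
  "thermal_supp_le n r s = (\<forall>k\<in>fock_idx n. thermal n r k \<noteq> 0 \<longrightarrow> thermal n s k \<noteq> 0)"

end

theory Submission
  imports Defs
begin

lemma ennreal_infsum_SUP: "infsum (f::'a\<Rightarrow>ennreal) A = (SUP F\<in>{F. finite F \<and> F\<subseteq>A}. sum f F)"
  by (rule nonneg_infsum_complete) simp

lemma infsum_cmult_ennreal: "infsum (\<lambda>x. c * f x) A = c * infsum (f::'a\<Rightarrow>ennreal) A"
  unfolding ennreal_infsum_SUP SUP_mult_left_ennreal by (simp add: sum_distrib_left)

lemma infsum_cmult_ennreal': "infsum (\<lambda>x. f x * c) A = infsum (f::'a\<Rightarrow>ennreal) A * c"
  using infsum_cmult_ennreal[of c f A] by (simp add: mult.commute)

lemma infsum_ge_term_ennreal: "x \<in> A \<Longrightarrow> (f::'a\<Rightarrow>ennreal) x \<le> infsum f A"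
  unfolding ennreal_infsum_SUP by (rule SUP_upper2[of "{x}"]) auto

lemma sum_le_infsum_ennreal: "finite F \<Longrightarrow> F \<subseteq> A \<Longrightarrow> sum (f::'a\<Rightarrow>ennreal) F \<le> infsum f A"
  unfolding ennreal_infsum_SUP by (rule SUP_upper) auto

lemma infsum_prod_ennreal:
  fixes u :: "'a\<Rightarrow>ennreal" and v :: "'b\<Rightarrow>ennreal"
  shows "infsum (\<lambda>(x,y). u x * v y) (A \<times> B) = infsum u A * infsum v B"
proof (rule antisym)
  show "infsum (\<lambda>(x,y). u x * v y) (A \<times> B) \<le> infsum u A * infsum v B"
    unfolding ennreal_infsum_SUP[of "\<lambda>(x,y). u x * v y"]
  proof (rule SUP_least)
    fix F assume F: "F \<in> {F. finite F \<and> F \<subseteq> A \<times> B}"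
    then have fin: "finite (fst ` F)" "finite (snd ` F)" by auto
    have "sum (\<lambda>(x,y). u x * v y) F \<le> sum (\<lambda>(x,y). u x * v y) (fst ` F \<times> snd ` F)"
      by (rule sum_mono2) (use fin in \<open>auto simp: rev_image_eqI\<close>)
    also have "\<dots> = sum u (fst ` F) * sum v (snd ` F)"
      by (simp add: sum_product sum.cartesian_product)
    also have "\<dots> \<le> infsum u A * infsum v B"
      using F fin by (intro mult_mono sum_le_infsum_ennreal) auto
    finally show "sum (\<lambda>(x,y). u x * v y) F \<le> infsum u A * infsum v B" .
  qed
next
  show "infsum u A * infsum v B \<le> infsum (\<lambda>(x,y). u x * v y) (A \<times> B)"
    unfolding ennreal_infsum_SUP[of u] ennreal_infsum_SUP[of v] SUP_mult_left_ennreal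
      SUP_mult_right_ennreal
  proof (intro SUP_least)
    fix F G assume F: "F \<in> {F. finite F \<and> F \<subseteq> A}" and G: "G \<in> {F. finite F \<and> F \<subseteq> B}"
    have "sum u F * sum v G = sum (\<lambda>(x,y). u x * v y) (F \<times> G)"
      by (simp add: sum_product sum.cartesian_product)
    also have "\<dots> \<le> infsum (\<lambda>(x,y). u x * v y) (A \<times> B)"
      using F G by (intro sum_le_infsum_ennreal) auto
    finally show "sum u F * sum v G \<le> infsum (\<lambda>(x,y). u x * v y) (A \<times> B)" .
  qed
qed

lemma pow_conv_mult: "0 \<le> x \<Longrightarrow> 0 \<le> y \<Longrightarrow> pow_conv (x*y) a = pow_conv x a * pow_conv y a"
  unfolding pow_conv_def
  by (auto simp: powr_mult ennreal_mult ennreal_mult_eq_top_iff ennreal_top_mult ennreal_mult_top)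

lemma pow_conv_prod: "finite A \<Longrightarrow> (\<And>i. i\<in>A \<Longrightarrow> 0 \<le> x i) \<Longrightarrow> pow_conv (\<Prod>i\<in>A. x i) a = (\<Prod>i\<in>A. pow_conv (x i) a)"
proof (induction A rule: finite_induct)
  case empty then show ?case by (simp add: pow_conv_def)
next
  case (insert i A)
  then show ?case by (simp add: pow_conv_mult prod_nonneg)
qed

lemma renyi_diag:
  "renyi_sum \<alpha> I p I q fock_overlap = infsum (\<lambda>k. pow_conv (p k) \<alpha> * pow_conv (q k) (1-\<alpha>)) I"
proof -
  have "renyi_sum \<alpha> I p I q fock_overlap = infsum (\<lambda>(i, j). pow_conv (p i) \<alpha> * pow_conv (q j) (1 - \<alpha>) * ennreal (fock_overlap i j)) ((\<lambda>k. (k,k)) ` I)"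
    unfolding renyi_sum_def by (rule infsum_cong_neutral) (auto simp: fock_overlap_def)
  also have "\<dots> = infsum (\<lambda>k. pow_conv (p k) \<alpha> * pow_conv (q k) (1-\<alpha>)) I"
    by (subst infsum_reindex) (auto simp: inj_on_def fock_overlap_def o_def)
  finally show ?thesis .
qed

lemma fock_prod:
  fixes f :: "nat \<Rightarrow> nat \<Rightarrow> ennreal"
  shows "infsum (\<lambda>k. \<Prod>j<n. f j (k j)) (fock_idx n) = (\<Prod>j<n. infsum (f j) (UNIV::nat set))"
proof (induction n)
  case 0
  have "fock_idx 0 = {\<lambda>_. 0}" by (auto simp: fock_idx_def)
  then show ?case by simp
next
  case (Suc n)
  have bij: "bij_betw (\<lambda>(k,m). k(n:=m)) (fock_idx n \<times> UNIV) (fock_idx (Suc n))"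
  proof (rule bij_betw_byWitness[where f'="\<lambda>k. (k(n:=0), k n)"])
  qed (auto simp: fock_idx_def)
  have "infsum (\<lambda>k. \<Prod>j<Suc n. f j (k j)) (fock_idx (Suc n))
      = infsum (\<lambda>x. (\<lambda>k. \<Prod>j<Suc n. f j (k j)) ((\<lambda>(k,m). k(n:=m)) x)) (fock_idx n \<times> UNIV)"
    by (rule infsum_reindex_bij_betw[OF bij, symmetric])
  also have "\<dots> = infsum (\<lambda>(k,m). (\<Prod>j<n. f j (k j)) * f n m) (fock_idx n \<times> UNIV)"
    by (rule infsum_cong) (auto simp: lessThan_Suc mult.commute intro!: prod.cong)
  also have "\<dots> = (\<Prod>j<Suc n. infsum (f j) UNIV)"
    using infsum_prod_ennreal[of "\<lambda>k. \<Prod>j<n. f j (k j)" "f n" "fock_idx n" UNIV] by (simp add: Suc.IH)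
  finally show ?case .
qed

definition fm :: "real \<Rightarrow> ereal \<Rightarrow> ereal \<Rightarrow> nat \<Rightarrow> ennreal" where
  "fm \<alpha> r s m = pow_conv (thermal1 r m) \<alpha> * pow_conv (thermal1 s m) (1-\<alpha>)"

lemma thermal1_nonneg: "0 < r \<Longrightarrow> 0 \<le> thermal1 r m"
  by (cases r) (auto simp: thermal1_def)

lemma thermal1_0_pos: "0 < r \<Longrightarrow> 0 < thermal1 r 0"
  by (cases r) (auto simp: thermal1_def)

lemma thermal1_pos: "0 < r \<Longrightarrow> r \<noteq> \<infinity> \<Longrightarrow> 0 < thermal1 r m"
  by (cases r) (auto simp: thermal1_def)

lemma pow_conv_pos: "0 < x \<Longrightarrow> pow_conv x a = ennreal (x powr a)"
  by (simp add: pow_conv_def)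

lemma fm_0_pos: "0 < r \<Longrightarrow> 0 < s \<Longrightarrow> 0 < fm \<alpha> r s 0 \<and> fm \<alpha> r s 0 < \<infinity>"
  using thermal1_0_pos[of r] thermal1_0_pos[of s]
  by (simp add: fm_def pow_conv_pos ennreal_mult_less_top flip: ennreal_mult)

lemma fm_finite:
  assumes a: "0 < a" and b: "0 < b"
  shows "fm \<alpha> (ereal a) (ereal b) m =
    ennreal (((1 - exp (-a)) powr \<alpha> * (1 - exp (-b)) powr (1-\<alpha>)) * exp (-(\<alpha>*a + (1-\<alpha>)*b)) ^ m)"
proof -
  have pa: "0 < 1 - exp (-a)" "0 < 1 - exp (-b)" using a b by auto
  have "fm \<alpha> (ereal a) (ereal b) m = ennreal (((1 - exp (-a)) * exp (- real m * a)) powr \<alpha>)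
     * ennreal (((1 - exp (-b)) * exp (- real m * b)) powr (1-\<alpha>))"
    using pa by (simp add: fm_def thermal1_def pow_conv_pos)
  also have "\<dots> = ennreal (((1 - exp (-a)) * exp (- real m * a)) powr \<alpha> * ((1 - exp (-b)) * exp (- real m * b)) powr (1-\<alpha>))"
    by (simp add: ennreal_mult)
  also have "((1 - exp (-a)) * exp (- real m * a)) powr \<alpha> * ((1 - exp (-b)) * exp (- real m * b)) powr (1-\<alpha>)
      = ((1 - exp (-a)) powr \<alpha> * (1 - exp (-b)) powr (1-\<alpha>)) * exp (-(\<alpha>*a + (1-\<alpha>)*b)) ^ m"
  proof -
    have "exp (-(\<alpha>*a + (1-\<alpha>)*b)) ^ m = exp (real m * (-(\<alpha>*a + (1-\<alpha>)*b)))"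
      by (simp add: exp_of_nat_mult)
    also have "\<dots> = exp (- real m * a * \<alpha>) * exp (- real m * b * (1-\<alpha>))"
      by (simp add: algebra_simps flip: exp_add)
    finally show ?thesis using pa
      by (simp add: powr_mult exp_powr_real)
  qed
  finally show ?thesis .
qed

lemma geom_infsum_ennreal:
  assumes C: "0 < C" and x: "0 < x"
  shows "infsum (\<lambda>m::nat. ennreal (C * x ^ m)) UNIV < \<infinity> \<longleftrightarrow> x < 1"
proof
  assume "x < 1"
  have sm: "summable (\<lambda>m. C * x ^ m)"
    using \<open>x < 1\<close> x by (intro summable_mult summable_geometric) auto
  have "infsum (\<lambda>m::nat. ennreal (C * x ^ m)) UNIV \<le> ennreal (suminf (\<lambda>m. C * x ^ m))"
    unfolding ennreal_infsum_SUP
  proof (rule SUP_least)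
    fix F assume F: "F \<in> {F. finite F \<and> F \<subseteq> (UNIV::nat set)}"
    have "sum (\<lambda>m. ennreal (C * x ^ m)) F = ennreal (sum (\<lambda>m. C * x ^ m) F)"
      using C x by (intro sum_ennreal) auto
    also have "\<dots> \<le> ennreal (suminf (\<lambda>m. C * x ^ m))"
      using F C x by (intro ennreal_leI sum_le_suminf[OF sm]) auto
    finally show "sum (\<lambda>m. ennreal (C * x ^ m)) F \<le> ennreal (suminf (\<lambda>m. C * x ^ m))" .
  qed
  then show "infsum (\<lambda>m::nat. ennreal (C * x ^ m)) UNIV < \<infinity>"
    using le_less_trans by fastforce
next
  assume "infsum (\<lambda>m::nat. ennreal (C * x ^ m)) UNIV < \<infinity>"
  moreover have "\<not> x < 1 \<Longrightarrow> infsum (\<lambda>m::nat. ennreal (C * x ^ m)) UNIV = \<infinity>"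
  proof (rule infsum_superconst_infinite_ennreal[where b="ennreal C"])
    fix m :: nat assume "\<not> x < 1"
    then have "1 \<le> x ^ m" by (simp add: one_le_power)
    then have "C * 1 \<le> C * x ^ m" using C by (intro mult_left_mono) auto
    then show "ennreal C \<le> ennreal (C * x ^ m)" by (intro ennreal_leI) simp
  qed (use C in auto)
  ultimately show "x < 1" by (metis less_irrefl)
qed

lemma mode_pos:
  assumes "0 < r" "0 < s"
  shows "0 < infsum (fm \<alpha> r s) UNIV"
  using fm_0_pos[OF assms, of \<alpha>] infsum_ge_term_ennreal[of 0 UNIV "fm \<alpha> r s"] by auto

lemma mode_fin:
  assumes r: "0 < r" and s: "0 < s" and \<alpha>: "0 < \<alpha>" "\<alpha> \<noteq> 1" and sp: "r \<noteq> \<infinity> \<Longrightarrow> s \<noteq> \<infinity>"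
  shows "infsum (fm \<alpha> r s) UNIV < \<infinity> \<longleftrightarrow>
    \<not> (1 < \<alpha> \<and> r < \<infinity> \<and> s < \<infinity> \<and> r < s \<and>
        \<not> \<alpha> < real_of_ereal s / (real_of_ereal s - real_of_ereal r))"
proof (cases "r = \<infinity>")
  case True
  have "infsum (fm \<alpha> r s) UNIV = infsum (fm \<alpha> r s) {0}"
    by (rule infsum_cong_neutral) (use True \<alpha> in \<open>auto simp: fm_def thermal1_def pow_conv_def\<close>)
  also have "\<dots> = fm \<alpha> r s 0" by simp
  finally show ?thesis using fm_0_pos[OF r s, of \<alpha>] True by simp
next
  case False
  with sp have sF: "s \<noteq> \<infinity>" by auto
  obtain a where ra: "r = ereal a" using False r by (cases r) auto
  obtain b where sb: "s = ereal b" using sF s by (cases s) auto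
  have a: "0 < a" and b: "0 < b" using r s ra sb by auto
  define C where "C = (1 - exp (-a)) powr \<alpha> * (1 - exp (-b)) powr (1-\<alpha>)"
  define c where "c = \<alpha>*a + (1-\<alpha>)*b"
  have C: "0 < C" unfolding C_def using a b by auto
  have "infsum (fm \<alpha> r s) UNIV = infsum (\<lambda>m::nat. ennreal (C * exp (-c) ^ m)) UNIV"
    unfolding ra sb fm_finite[OF a b] C_def c_def ..
  then have "infsum (fm \<alpha> r s) UNIV < \<infinity> \<longleftrightarrow> exp (-c) < 1"
    using geom_infsum_ennreal[OF C, of "exp (-c)"] by simp
  also have "\<dots> \<longleftrightarrow> 0 < c" by simp
  also have "\<dots> \<longleftrightarrow> \<not> (1 < \<alpha> \<and> a < b \<and> \<not> \<alpha> < b / (b - a))"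
  proof -
    have "0 < c" if "\<alpha> < 1"
    proof -
      have "0 < \<alpha>*a" "0 < (1-\<alpha>)*b" using that \<alpha> a b by auto
      then show ?thesis unfolding c_def by linarith
    qed
    moreover have "0 < c" if "1 < \<alpha>" "b \<le> a"
    proof -
      have "0 \<le> (\<alpha> - 1) * (a - b)" using that by auto
      then show ?thesis unfolding c_def using a b by (simp add: algebra_simps)
    qed
    moreover have "0 < c \<longleftrightarrow> \<alpha> < b / (b - a)" if "a < b"
    proof -
      have "\<alpha> < b / (b - a) \<longleftrightarrow> \<alpha> * (b - a) < b" using that by (simp add: pos_less_divide_eq)
      then show ?thesis unfolding c_def by (simp add: algebra_simps)
    qed
    ultimately show ?thesis using \<alpha> by (cases "\<alpha> < 1"; cases "a < b") (auto simp: not_less)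
  qed
  finally show ?thesis using ra sb by simp
qed

lemma D_fin_iff:
  assumes "S \<noteq> 0" "0 < \<alpha>" "\<alpha> \<noteq> 1"
  shows "ereal (1 / (\<alpha> - 1)) * log_ext S < \<infinity> \<longleftrightarrow> (\<alpha> < 1 \<or> S \<noteq> \<infinity>)"
proof (cases "S = \<infinity>")
  case True
  then show ?thesis using assms
    by (cases "\<alpha> < 1") (auto simp: log_ext_def divide_less_0_iff)
next
  case False
  then show ?thesis using assms by (simp add: log_ext_def)
qed

theorem theorem3p1:
  fixes n :: nat and r s :: "nat \<Rightarrow> ereal" and \<alpha> :: real
  assumes r_pos: "\<forall>j<n. 0 < r j" and s_pos: "\<forall>j<n. 0 < s j"
    and supp: "thermal_supp_le n r s"
    and \<alpha>: "0 < \<alpha>" "\<alpha> \<noteq> 1"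
  defines "Frs \<equiv> {j. j < n \<and> r j < \<infinity> \<and> s j < \<infinity> \<and> r j < s j}"
  shows "(Frs = {} \<longrightarrow> D_thermal \<alpha> n r s < \<infinity>)
       \<and> (Frs \<noteq> {} \<longrightarrow>
           (D_thermal \<alpha> n r s < \<infinity> \<longleftrightarrow>
            \<alpha> < Min ((\<lambda>j. real_of_ereal (s j) / (real_of_ereal (s j) - real_of_ereal (r j))) ` Frs)))"
proof -
  define g where "g j = real_of_ereal (s j) / (real_of_ereal (s j) - real_of_ereal (r j))" for j
  define T where "T j = infsum (fm \<alpha> (r j) (s j)) UNIV" for j
  define S where "S = renyi_sum \<alpha> (fock_idx n) (thermal n r) (fock_idx n) (thermal n s) fock_overlap"
  have S_eq: "S = (\<Prod>j<n. T j)"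
  proof -
    have "S = infsum (\<lambda>k. \<Prod>j<n. fm \<alpha> (r j) (s j) (k j)) (fock_idx n)"
      unfolding S_def renyi_diag
    proof (rule infsum_cong)
      fix k :: "nat \<Rightarrow> nat"
      show "pow_conv (thermal n r k) \<alpha> * pow_conv (thermal n s k) (1 - \<alpha>) = (\<Prod>j<n. fm \<alpha> (r j) (s j) (k j))"
        unfolding thermal_def fm_def prod.distrib
        using r_pos s_pos by (subst (1 2) pow_conv_prod) (auto intro: thermal1_nonneg)
    qed
    also have "\<dots> = (\<Prod>j<n. T j)" unfolding T_def by (rule fock_prod)
    finally show ?thesis .
  qed
  have sp: "s j \<noteq> \<infinity>" if j: "j < n" and rj: "r j \<noteq> \<infinity>" for j
  proof -
    define k where "k = (\<lambda>i. if i = j then 1 else 0::nat)"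
    have kI: "k \<in> fock_idx n" using j by (auto simp: k_def fock_idx_def)
    have "thermal n r k \<noteq> 0"
      unfolding thermal_def using r_pos rj thermal1_0_pos thermal1_pos
      by (auto simp: k_def) (metis less_irrefl)+
    then have "thermal n s k \<noteq> 0" using supp kI by (auto simp: thermal_supp_le_def)
    then have "\<forall>i\<in>{..<n}. thermal1 (s i) (k i) \<noteq> 0" unfolding thermal_def by simp
    then have "thermal1 (s j) (k j) \<noteq> 0" using j by blast
    then have "thermal1 (s j) 1 \<noteq> 0" by (simp add: k_def)
    then show ?thesis by (auto simp: thermal1_def)
  qed
  have Tpos: "0 < T j" if "j < n" for j
    unfolding T_def using that r_pos s_pos by (intro mode_pos) auto
  have Tfin: "T j < \<infinity> \<longleftrightarrow> \<not> (1 < \<alpha> \<and> j \<in> Frs \<and> \<not> \<alpha> < g j)" if "j < n" for j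
    unfolding T_def g_def Frs_def using that r_pos s_pos \<alpha> sp
    by (subst mode_fin) auto
  have S0: "S \<noteq> 0" unfolding S_eq using Tpos by (force simp: prod_zero_iff)
  have Sfin: "S \<noteq> \<infinity> \<longleftrightarrow> (\<forall>j<n. T j < \<infinity>)"
    unfolding S_eq using Tpos by (auto simp: ennreal_prod_eq_top top.not_eq_extremum) (metis less_irrefl)
  have g1: "1 \<le> g j" if "j \<in> Frs" for j
  proof -
    from that have "r j < s j" "0 < r j" "s j < \<infinity>" using r_pos by (auto simp: Frs_def)
    then obtain a b where "r j = ereal a" "s j = ereal b" "0 < a" "a < b"
      by (cases "r j"; cases "s j") auto
    then show ?thesis by (simp add: g_def)
  qed
  have key: "D_thermal \<alpha> n r s < \<infinity> \<longleftrightarrow> (\<forall>j\<in>Frs. \<alpha> < g j)"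
  proof -
    have "D_thermal \<alpha> n r s < \<infinity> \<longleftrightarrow> (\<alpha> < 1 \<or> S \<noteq> \<infinity>)"
      unfolding D_thermal_def petz_renyi_def S_def[symmetric] using D_fin_iff[OF S0 \<alpha>] .
    also have "\<dots> \<longleftrightarrow> (\<forall>j\<in>Frs. \<alpha> < g j)"
    proof (cases "\<alpha> < 1")
      case True
      then show ?thesis using g1 by force
    next
      case False
      then have "1 < \<alpha>" using \<alpha> by auto
      then show ?thesis unfolding Sfin using Tfin by (auto simp: Frs_def)
    qed
    finally show ?thesis .
  qed
  have finF: "finite Frs" unfolding Frs_def by auto
  show ?thesis
    unfolding key g_def[symmetric] using finF by (auto simp: Min_gr_iff)
qed

end
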